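(* Let $f:\mathbb{R}^n\to\mathbb{R}$ be continuously differentiable and bounded below, let $x,d\in\mathbb{R}^n$ with $\langle g,d\rangle<0$ where $g=\nabla f(x)$, and let $0<2\rho<\sigma<1$, $\eta=\frac{\sigma}{2(\sigma-\rho)}$. Say that $\alpha>0$ satisfies (W1) if $f(x+\alpha d)\le f(x)+\rho\alpha\langle g,d\rangle$, and satisfies (W2) if $\langle\nabla f(x+\alpha d),d\rangle\ge\sigma\langle g,d\rangle$. Set $\alpha_0'=0$ and let $\alpha_0''>0$ be any number at which (W1) fails (such a number exists). For $\ell=0,1,2,\dots$, with $x_\ell'=x+\alpha_\ell' d$, $x_\ell''=x+\alpha_\ell'' d$, define $$c_\ell=\alpha_\ell'+\frac{\alpha_\ell''-\alpha_\ell'}{2}\cdot\frac{-(\alpha_\ell''-\alpha_\ell')\langle\nabla f(x_\ell'),d\rangle}{f(x_\ell'')-f(x_\ell')-(\alpha_\ell''-\alpha_\ell')\langle\nabla f(x_\ell'),d\rangle},\qquad \tilde c_\ell=\max\{c_\ell,\ \eta\alpha_\ell'+(1-\eta)\alpha_\ell''\}.$$ If $\tilde c_\ell$ satisfies both (W1) and (W2), stop and output $\alpha=\tilde c_\ell$. Otherwise set $[\alpha_{\ell+1}',\alpha_{\ell+1}'']=[\alpha_\ell',\tilde c_\ell]$ if $\tilde c_\ell$ does not satisfy (W1), and $[\alpha_{\ell+1}',\alpha_{\ell+1}'']=[\tilde c_\ell,\alpha_\ell'']$ otherwise. Then this procedure is well defined and stops after finitely many iterations, i.e. there is a finite $\ell^*$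 such that $\alpha=\tilde c_{\ell^*}$ satisfies (W1) and (W2).
   Context: $\langle\cdot,\cdot\rangle$ is the Euclidean inner product on $\mathbb{R}^n$. (W1)–(W2) are the standard (weak) Wolfe–Powell conditions for the step $\alpha$ along $d$ at $x$. *)

theory Defs
  imports "HOL-Analysis.Analysis"
begin

definition W1 :: "('a::euclidean_space \<Rightarrow> real) \<Rightarrow> ('a \<Rightarrow> 'a) \<Rightarrow> 'a \<Rightarrow> 'a \<Rightarrow> real \<Rightarrow> real \<Rightarrow> bool" where
  "W1 f f' x d \<rho> \<alpha> \<longleftrightarrow> \<alpha> > 0 \<and> f (x + \<alpha> *\<^sub>R d) \<le> f x + \<rho> * \<alpha> * (f' x \<bullet> d)"

definition W2 :: "('a::euclidean_space \<Rightarrow> real) \<Rightarrow> ('a \<Rightarrow> 'a) \<Rightarrow> 'a \<Rightarrow> 'a \<Rightarrow> real \<Rightarrow> real \<Rightarrow> bool" where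
  "W2 f f' x d \<sigma> \<alpha> \<longleftrightarrow> \<alpha> > 0 \<and> f' (x + \<alpha> *\<^sub>R d) \<bullet> d \<ge> \<sigma> * (f' x \<bullet> d)"

definition ls_den :: "('a::euclidean_space \<Rightarrow> real) \<Rightarrow> ('a \<Rightarrow> 'a) \<Rightarrow> 'a \<Rightarrow> 'a \<Rightarrow> real \<Rightarrow> real \<Rightarrow> real" where
  "ls_den f f' x d a1 a2 =
     f (x + a2 *\<^sub>R d) - f (x + a1 *\<^sub>R d) - (a2 - a1) * (f' (x + a1 *\<^sub>R d) \<bullet> d)"

definition ls_c :: "('a::euclidean_space \<Rightarrow> real) \<Rightarrow> ('a \<Rightarrow> 'a) \<Rightarrow> 'a \<Rightarrow> 'a \<Rightarrow> real \<Rightarrow> real \<Rightarrow> real" where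
  "ls_c f f' x d a1 a2 =
     a1 + (a2 - a1) / 2 * ((- (a2 - a1) * (f' (x + a1 *\<^sub>R d) \<bullet> d)) / ls_den f f' x d a1 a2)"

definition ls_ct :: "('a::euclidean_space \<Rightarrow> real) \<Rightarrow> ('a \<Rightarrow> 'a) \<Rightarrow> 'a \<Rightarrow> 'a \<Rightarrow> real \<Rightarrow> real \<Rightarrow> real \<Rightarrow> real" where
  "ls_ct f f' x d \<eta> a1 a2 = max (ls_c f f' x d a1 a2) (\<eta> * a1 + (1 - \<eta>) * a2)"

text \<open>One bracket update (used while the stopping test fails).\<close>
definition ls_step :: "('a::euclidean_space \<Rightarrow> real) \<Rightarrow> ('a \<Rightarrow> 'a) \<Rightarrow> 'a \<Rightarrow> 'a \<Rightarrow> real \<Rightarrow> real \<Rightarrow> real \<times> real \<Rightarrow> real \<times> real" where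
  "ls_step f f' x d \<rho> \<eta> p =
     (let a1 = fst p; a2 = snd p; ct = ls_ct f f' x d \<eta> a1 a2 in
      if \<not> W1 f f' x d \<rho> ct then (a1, ct) else (ct, a2))"

definition ls_bracket :: "('a::euclidean_space \<Rightarrow> real) \<Rightarrow> ('a \<Rightarrow> 'a) \<Rightarrow> 'a \<Rightarrow> 'a \<Rightarrow> real \<Rightarrow> real \<Rightarrow> real \<Rightarrow> nat \<Rightarrow> real \<times> real" where
  "ls_bracket f f' x d \<rho> \<eta> a0 l = (ls_step f f' x d \<rho> \<eta> ^^ l) (0, a0)"

end

theory Submission
  imports Defs
begin
lemma phi_deriv:
  fixes f :: "'a::euclidean_space \<Rightarrow> real"
  assumes grad: "\<And>y. (f has_derivative (\<lambda>h. f' y \<bullet> h)) (at y)"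
  shows "((\<lambda>t. f (x + t *\<^sub>R d)) has_real_derivative (f' (x + t *\<^sub>R d) \<bullet> d)) (at t)"
proof -
  have "((\<lambda>t. x + t *\<^sub>R d) has_derivative (\<lambda>s. s *\<^sub>R d)) (at t)"
    by (auto intro!: derivative_eq_intros)
  from diff_chain_at[OF this grad[of "x + t *\<^sub>R d"]]
  have "((\<lambda>t. f (x + t *\<^sub>R d)) has_derivative (\<lambda>s. f' (x + t *\<^sub>R d) \<bullet> (s *\<^sub>R d))) (at t)"
    by (simp add: o_def)
  then show ?thesis unfolding has_field_derivative_def
    by (rule has_derivative_eq_rhs) (auto simp: fun_eq_iff)
qed

lemma contr:
  fixes g0 p h D \<rho> \<sigma> :: real
  assumes "g0 < 0" "h > 0" "0 < 2*\<rho>" "2*\<rho> < \<sigma>" "\<sigma> < 1" "D > \<rho>*h*g0" "p < \<sigma>*g0"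
  shows "D - h*p > 0" "-h*p/(D-h*p) > 0" "h/2*(-h*p/(D-h*p)) \<le> \<sigma>/(2*(\<sigma>-\<rho>)) * h"
proof -
  have a: "h*p < h*(\<sigma>*g0)" using assms by simp
  have b: "h*(\<sigma>*g0) < h*(\<rho>*g0)"
    using assms by (intro mult_strict_left_mono) (auto simp: mult_less_cancel_right)
  have e: "\<rho>*h*g0 = h*(\<rho>*g0)" by simp
  show 1: "D - h*p > 0" using a b assms(6) e by linarith
  have "-h*p > 0" using a assms by (smt (verit) mult_pos_neg mult_neg_neg)
  then show "-h*p/(D-h*p) > 0" using 1 by (intro divide_pos_pos) auto
  have c: "h*p*\<rho> < h*(\<sigma>*g0)*\<rho>" using a assms by simp
  have d: "\<sigma>*(\<rho>*h*g0) < \<sigma>*D" using assms by simp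
  have "-h*p*(\<sigma>-\<rho>) \<le> \<sigma>*(D-h*p)" using c d by (simp add: algebra_simps)
  then have "-h*p/(D-h*p) \<le> \<sigma>/(\<sigma>-\<rho>)" using 1 assms by (simp add: field_simps)
  then have "h/2*(-h*p/(D-h*p)) \<le> h/2*(\<sigma>/(\<sigma>-\<rho>))" using assms by (intro mult_left_mono) auto
  then show "h/2*(-h*p/(D-h*p)) \<le> \<sigma>/(2*(\<sigma>-\<rho>)) * h" by (simp add: field_simps)
qed
definition Inv where
  "Inv f f' x d \<rho> \<sigma> a1 a2 \<longleftrightarrow> 0 \<le> a1 \<and> a1 < a2 \<and>
     f (x + a1 *\<^sub>R d) \<le> f x + \<rho> * a1 * (f' x \<bullet> d) \<and>
     f' (x + a1 *\<^sub>R d) \<bullet> d < \<sigma> * (f' x \<bullet> d) \<and>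
     f (x + a2 *\<^sub>R d) > f x + \<rho> * a2 * (f' x \<bullet> d)"

lemma Dbound:
  fixes f :: "'a::euclidean_space \<Rightarrow> real"
  assumes "Inv f f' x d \<rho> \<sigma> a1 a2"
  shows "f (x + a2 *\<^sub>R d) - f (x + a1 *\<^sub>R d) > \<rho> * (a2 - a1) * (f' x \<bullet> d)"
proof -
  have "\<rho> * (a2 - a1) * (f' x \<bullet> d) = \<rho> * a2 * (f' x \<bullet> d) - \<rho> * a1 * (f' x \<bullet> d)"
    by (simp add: algebra_simps)
  then show ?thesis using assms unfolding Inv_def by linarith
qed

lemma den_pos:
  fixes f :: "'a::euclidean_space \<Rightarrow> real"
  assumes "Inv f f' x d \<rho> \<sigma> a1 a2" "f' x \<bullet> d < 0" "0 < 2*\<rho>" "2*\<rho> < \<sigma>" "\<sigma> < 1"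
  shows "ls_den f f' x d a1 a2 > 0"
    "ls_c f f' x d a1 a2 > a1"
    "ls_c f f' x d a1 a2 \<le> a1 + \<sigma>/(2*(\<sigma>-\<rho>)) * (a2 - a1)"
proof -
  have h: "a2 - a1 > 0" and p: "f' (x + a1 *\<^sub>R d) \<bullet> d < \<sigma> * (f' x \<bullet> d)"
    using assms(1) unfolding Inv_def by auto
  have D: "f (x + a2 *\<^sub>R d) - f (x + a1 *\<^sub>R d) > \<rho> * (a2 - a1) * (f' x \<bullet> d)"
    by (rule Dbound[OF assms(1)])
  note C = contr[OF assms(2) h assms(3-5) D p]
  show "ls_den f f' x d a1 a2 > 0" using C(1) unfolding ls_den_def by simp
  have "(a2 - a1)/2 * ((- (a2 - a1) * (f' (x + a1 *\<^sub>R d) \<bullet> d)) / ls_den f f' x d a1 a2) > 0"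
    using C(2) h unfolding ls_den_def by (intro mult_pos_pos) auto
  then show "ls_c f f' x d a1 a2 > a1" unfolding ls_c_def by simp
  show "ls_c f f' x d a1 a2 \<le> a1 + \<sigma>/(2*(\<sigma>-\<rho>)) * (a2 - a1)"
    using C(3) unfolding ls_c_def ls_den_def by simp
qed

lemma step:
  fixes f :: "'a::euclidean_space \<Rightarrow> real"
  assumes inv: "Inv f f' x d \<rho> \<sigma> a1 a2" and desc: "f' x \<bullet> d < 0"
    and rho: "0 < 2*\<rho>" "2*\<rho> < \<sigma>" "\<sigma> < 1" and eta: "\<eta> = \<sigma> / (2 * (\<sigma> - \<rho>))"
    and ns: "\<not> (W1 f f' x d \<rho> (ls_ct f f' x d \<eta> a1 a2) \<and> W2 f f' x d \<sigma> (ls_ct f f' x d \<eta> a1 a2))"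
  shows "Inv f f' x d \<rho> \<sigma> (fst (ls_step f f' x d \<rho> \<eta> (a1,a2))) (snd (ls_step f f' x d \<rho> \<eta> (a1,a2)))
     \<and> snd (ls_step f f' x d \<rho> \<eta> (a1,a2)) \<le> a2
     \<and> snd (ls_step f f' x d \<rho> \<eta> (a1,a2)) - fst (ls_step f f' x d \<rho> \<eta> (a1,a2)) \<le> \<eta> * (a2 - a1)"
proof -
  define ct where "ct = ls_ct f f' x d \<eta> a1 a2"
  note DP = den_pos[OF inv desc rho]
  have h: "a1 < a2" "0 \<le> a1" using inv unfolding Inv_def by auto
  have e1: "\<eta> > 1/2" using rho unfolding eta by (simp add: field_simps)
  have e2: "\<eta> < 1" using rho unfolding eta by (simp add: field_simps)
  have lin: "\<eta> * a1 + (1 - \<eta>) * a2 = a1 + (1 - \<eta>) * (a2 - a1)" by (simp add: algebra_simps)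
  have m1: "(1 - \<eta>) * (a2 - a1) > 0" using e2 h by simp
  have m2: "(1 - \<eta>) * (a2 - a1) \<le> \<eta> * (a2 - a1)" using e1 h by (intro mult_right_mono) auto
  have m3: "\<eta> * (a2 - a1) < a2 - a1" using e2 h by simp
  have m4: "(1 - \<eta>) * (a2 - a1) + \<eta> * (a2 - a1) = a2 - a1" by (simp add: algebra_simps)
  have ctd: "ct = max (ls_c f f' x d a1 a2) (a1 + (1 - \<eta>) * (a2 - a1))"
    unfolding ct_def ls_ct_def lin ..
  have c3: "ls_c f f' x d a1 a2 \<le> a1 + \<eta> * (a2 - a1)" using DP(3) unfolding eta .
  have ct1: "ct > a1" "ct < a2" "ct - a1 \<le> \<eta> * (a2 - a1)" "a2 - ct \<le> \<eta> * (a2 - a1)"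
    unfolding ctd using DP(2) c3 m1 m2 m3 m4 by (auto simp only: max_def split: if_splits)
  have ctp: "ct > 0" using ct1 h by linarith
  show ?thesis
  proof (cases "W1 f f' x d \<rho> ct")
    case False
    then have "ls_step f f' x d \<rho> \<eta> (a1,a2) = (a1, ct)" unfolding ls_step_def ct_def by simp
    moreover have "f (x + ct *\<^sub>R d) > f x + \<rho> * ct * (f' x \<bullet> d)"
      using False ctp unfolding W1_def by auto
    ultimately show ?thesis using inv ct1 unfolding Inv_def by auto
  next
    case True
    then have nw2: "\<not> W2 f f' x d \<sigma> ct" using ns unfolding ct_def by auto
    have "ls_step f f' x d \<rho> \<eta> (a1,a2) = (ct, a2)" using True unfolding ls_step_def ct_def by simp
    moreover have "f (x + ct *\<^sub>R d) \<le> f x + \<rho> * ct * (f' x \<bullet> d)"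
      using True unfolding W1_def by auto
    moreover have "f' (x + ct *\<^sub>R d) \<bullet> d < \<sigma> * (f' x \<bullet> d)"
      using nw2 ctp unfolding W2_def by auto
    ultimately show ?thesis using inv ct1 ctp unfolding Inv_def by auto
  qed
qed

lemma mvt_xi:
  fixes f :: "'a::euclidean_space \<Rightarrow> real"
  assumes grad: "\<And>y. (f has_derivative (\<lambda>h. f' y \<bullet> h)) (at y)"
    and inv: "Inv f f' x d \<rho> \<sigma> a1 a2"
  shows "\<exists>\<xi>. a1 < \<xi> \<and> \<xi> < a2 \<and> f' (x + \<xi> *\<^sub>R d) \<bullet> d > \<rho> * (f' x \<bullet> d)"
proof -
  have h: "a1 < a2" using inv unfolding Inv_def by auto
  obtain z where z: "a1 < z" "z < a2"
    "f (x + a2 *\<^sub>R d) - f (x + a1 *\<^sub>R d) = (a2 - a1) * (f' (x + z *\<^sub>R d) \<bullet> d)"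
    using MVT2[OF h, of "\<lambda>t. f (x + t *\<^sub>R d)" "\<lambda>t. f' (x + t *\<^sub>R d) \<bullet> d"]
      phi_deriv[OF grad] by blast
  have "(a2 - a1) * (f' (x + z *\<^sub>R d) \<bullet> d) > (a2 - a1) * (\<rho> * (f' x \<bullet> d))"
    using Dbound[OF inv] z(3) by (simp add: algebra_simps)
  then have "f' (x + z *\<^sub>R d) \<bullet> d > \<rho> * (f' x \<bullet> d)" using h by simp
  then show ?thesis using z by blast
qed

theorem lemma2:
  fixes f :: "'a::euclidean_space \<Rightarrow> real" and f' :: "'a \<Rightarrow> 'a"
    and x d :: 'a and \<rho> \<sigma> \<eta> :: real
  assumes grad: "\<And>y. (f has_derivative (\<lambda>h. f' y \<bullet> h)) (at y)"
    and cont: "continuous_on UNIV f'"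
    and bdd: "bdd_below (range f)"
    and descent: "f' x \<bullet> d < 0"
    and rho: "0 < 2 * \<rho>" "2 * \<rho> < \<sigma>" "\<sigma> < 1"
    and eta: "\<eta> = \<sigma> / (2 * (\<sigma> - \<rho>))"
  shows "(\<exists>a0. a0 > 0 \<and> \<not> W1 f f' x d \<rho> a0) \<and>
    (\<forall>a0. a0 > 0 \<and> \<not> W1 f f' x d \<rho> a0 \<longrightarrow>
       (\<exists>L. (\<forall>l\<le>L. ls_den f f' x d (fst (ls_bracket f f' x d \<rho> \<eta> a0 l))
                                      (snd (ls_bracket f f' x d \<rho> \<eta> a0 l)) \<noteq> 0)
          \<and> (let p = ls_bracket f f' x d \<rho> \<eta> a0 L;
                 ct = ls_ct f f' x d \<eta> (fst p) (snd p)
             in W1 f f' x d \<rho> ct \<and> W2 f f' x d \<sigma> ct)))"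
proof (intro conjI allI impI)
  define g0 where "g0 = f' x \<bullet> d"
  have g0: "g0 < 0" using descent g0_def by simp
  have rp: "\<rho> > 0" using rho by simp
  show "\<exists>a0. a0 > 0 \<and> \<not> W1 f f' x d \<rho> a0"
  proof -
    obtain B where B: "\<And>y. B \<le> f y" using bdd unfolding bdd_below_def by auto
    define a where "a = max 1 ((f x - B + 1) / (\<rho> * (- g0)))"
    have pos: "\<rho> * (- g0) > 0" using rp g0 by (simp add: mult_pos_neg)
    have "(f x - B + 1) / (\<rho> * (- g0)) \<le> a" unfolding a_def by simp
    then have "f x - B + 1 \<le> a * (\<rho> * (- g0))" using pos by (metis pos_divide_le_eq)
    then have "f x + \<rho> * a * g0 < B" by (simp add: algebra_simps)
    also have "B \<le> f (x + a *\<^sub>R d)" by (rule B)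
    finally have "\<not> W1 f f' x d \<rho> a" unfolding W1_def g0_def by auto
    moreover have "a > 0" unfolding a_def by simp
    ultimately show ?thesis by blast
  qed
  fix a0 assume a0: "a0 > 0 \<and> \<not> W1 f f' x d \<rho> a0"
  define B where "B l = ls_bracket f f' x d \<rho> \<eta> a0 l" for l
  define stop where "stop l = (W1 f f' x d \<rho> (ls_ct f f' x d \<eta> (fst (B l)) (snd (B l)))
       \<and> W2 f f' x d \<sigma> (ls_ct f f' x d \<eta> (fst (B l)) (snd (B l))))" for l
  have BS: "B (Suc l) = ls_step f f' x d \<rho> \<eta> (fst (B l), snd (B l))" for l
    unfolding B_def ls_bracket_def by simp
  have e0: "\<eta> > 0" using rho unfolding eta by (simp add: field_simps)
  have e2: "\<eta> < 1" using rho unfolding eta by (simp add: field_simps)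
  have I: "(\<forall>k<l. \<not> stop k) \<longrightarrow> Inv f f' x d \<rho> \<sigma> (fst (B l)) (snd (B l))
      \<and> snd (B l) \<le> a0 \<and> snd (B l) - fst (B l) \<le> \<eta> ^ l * a0" for l
  proof (induction l)
    case 0
    have "Inv f f' x d \<rho> \<sigma> 0 a0"
      using a0 g0 rho unfolding Inv_def W1_def g0_def by auto
    then show ?case unfolding B_def ls_bracket_def by simp
  next
    case (Suc l)
    show ?case
    proof
      assume ns: "\<forall>k<Suc l. \<not> stop k"
      then have IH: "Inv f f' x d \<rho> \<sigma> (fst (B l)) (snd (B l))"
          "snd (B l) \<le> a0" "snd (B l) - fst (B l) \<le> \<eta> ^ l * a0" using Suc by auto
      have "\<not> stop l" using ns by auto
      note S = step[OF IH(1) descent rho eta this[unfolded stop_def]]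
      have "snd (B (Suc l)) - fst (B (Suc l)) \<le> \<eta> * (snd (B l) - fst (B l))"
        using S unfolding BS by blast
      also have "\<dots> \<le> \<eta> * (\<eta> ^ l * a0)" using IH(3) e0 by (intro mult_left_mono) auto
      finally show "Inv f f' x d \<rho> \<sigma> (fst (B (Suc l))) (snd (B (Suc l)))
      \<and> snd (B (Suc l)) \<le> a0 \<and> snd (B (Suc l)) - fst (B (Suc l)) \<le> \<eta> ^ Suc l * a0"
        using S IH(2) unfolding BS by auto
    qed
  qed
  have ex: "\<exists>l. stop l"
  proof (rule ccontr)
    assume "\<not> (\<exists>l. stop l)"
    then have I2: "Inv f f' x d \<rho> \<sigma> (fst (B l)) (snd (B l))
      \<and> snd (B l) \<le> a0 \<and> snd (B l) - fst (B l) \<le> \<eta> ^ l * a0" for l using I by auto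
    define \<phi>' where "\<phi>' t = f' (x + t *\<^sub>R d) \<bullet> d" for t
    have "continuous_on UNIV \<phi>'" unfolding \<phi>'_def
      by (intro continuous_intros continuous_on_compose2[OF cont]) auto
    then have "uniformly_continuous_on {0..a0} \<phi>'"
      by (intro compact_uniformly_continuous) (auto intro: continuous_on_subset)
    moreover have epos: "(\<sigma> - \<rho>) * (- g0) > 0" using rho g0 by (intro mult_pos_pos) auto
    ultimately obtain \<delta> where \<delta>: "\<delta> > 0"
      "\<And>s t. s \<in> {0..a0} \<Longrightarrow> t \<in> {0..a0} \<Longrightarrow> dist s t < \<delta> \<Longrightarrow> dist (\<phi>' s) (\<phi>' t) < (\<sigma> - \<rho>) * (- g0)"
      unfolding uniformly_continuous_on_def by metis
    obtain l where l: "\<eta> ^ l < \<delta> / a0" using real_arch_pow_inv[of "\<delta> / a0" \<eta>] \<delta>(1) a0 e2 by auto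
    have lt: "\<eta> ^ l * a0 < \<delta>" using l a0 by (simp add: pos_less_divide_eq)
    define a1 a2 where "a1 = fst (B l)" "a2 = snd (B l)"
    have inv: "Inv f f' x d \<rho> \<sigma> a1 a2" "a2 \<le> a0" "a2 - a1 < \<delta>"
      using I2[of l] lt unfolding a1_a2_def by auto
    obtain \<xi> where \<xi>: "a1 < \<xi>" "\<xi> < a2" "\<phi>' \<xi> > \<rho> * g0"
      using mvt_xi[OF grad inv(1)] unfolding \<phi>'_def g0_def by blast
    have p1: "\<phi>' a1 < \<sigma> * g0" "0 \<le> a1" using inv(1) unfolding Inv_def \<phi>'_def g0_def by auto
    have "dist (\<phi>' \<xi>) (\<phi>' a1) < (\<sigma> - \<rho>) * (- g0)"
      using \<delta>(2)[of \<xi> a1] \<xi> inv p1 by (auto simp: dist_real_def)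
    moreover have "(\<sigma> - \<rho>) * (- g0) = \<rho> * g0 - \<sigma> * g0" by (simp add: algebra_simps)
    ultimately show False using \<xi>(3) p1(1) by (auto simp: dist_real_def)
  qed
  define L where "L = (LEAST l. stop l)"
  have sL: "stop L" unfolding L_def using ex by (rule LeastI_ex)
  have "\<forall>l\<le>L. ls_den f f' x d (fst (B l)) (snd (B l)) \<noteq> 0"
  proof (intro allI impI)
    fix l assume "l \<le> L"
    then have "\<forall>k<l. \<not> stop k" using not_less_Least[of _ stop] unfolding L_def by (meson less_le_trans)
    then have "Inv f f' x d \<rho> \<sigma> (fst (B l)) (snd (B l))" using I by blast
    from den_pos(1)[OF this descent rho] show "ls_den f f' x d (fst (B l)) (snd (B l)) \<noteq> 0" by simp
  qed
  then show "\<exists>L. (\<forall>l\<le>L. ls_den f f' x d (fst (ls_bracket f f' x d \<rho> \<eta> a0 l))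
                                      (snd (ls_bracket f f' x d \<rho> \<eta> a0 l)) \<noteq> 0)
          \<and> (let p = ls_bracket f f' x d \<rho> \<eta> a0 L;
                 ct = ls_ct f f' x d \<eta> (fst p) (snd p)
             in W1 f f' x d \<rho> ct \<and> W2 f f' x d \<sigma> ct)"
    using sL unfolding B_def stop_def Let_def by blast
qed

end
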